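(* Let $\Gamma$ be a finitely generated group, let $\Gamma=\Gamma_0\ge\Gamma_1\ge\cdots$ be a chain of normal subgroups of finite index in $\Gamma$, and let $f$ be the boundary action of $\Gamma$ with respect to $(\Gamma_n)$. Then $f$ is strongly ergodic if and only if it has spectral gap.
   Context: A chain in $\Gamma$ is a sequence $\Gamma=\Gamma_0\ge\Gamma_1\ge\cdots$ of finite index subgroups. The coset tree $T(\Gamma,(\Gamma_n))$ has as vertices the right cosets $\Gamma_n g$ ($n\ge0$, $g\in\Gamma$), with $\Gamma_n g$ joined to $\Gamma_{n+1}h$ when $\Gamma_{n+1}h\subseteq\Gamma_n g$; $\Gamma$ acts on it by right multiplication. Its boundary $\partial T$ is the set of infinite rays from the root, with the topology generated by shadows $\mathrm{Sh}(\Gamma_n g)$ (rays through $\Gamma_n g$) and the Borel probability measure $\mu$ with $\mu(\mathrm{Sh}(\Gamma_ng))=1/|\Gamma:\Gamma_n|$. The boundary action is the induced measure preserving action of $\Gamma$ on $(\partial T,\mu)$. An action on $(X,\mu)$ is strongly ergodic if it is ergodic and every sequence $A_n$ of measurable sets with $\mu(A_n\setminus A_n\gamma)\to0$ for all $\gamma$ satisfies $\mu(A_n)(1-\mu(A_n))\to0$. It has spectral gap if there is no sequence $A_n$ of measurable sets of positive measure with $\mu(A_n\gamma\setminus A_n)/\mu(A_n)\to0$ for all $\gamma\in\Gamma$ (equivalently, the Koopman representation on $L^2_0(X,\mu)$ has no almost invariant vectors). *)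

theory Defs
  imports "HOL-Probability.Probability" "HOL-Algebra.Generated_Groups" "HOL-Algebra.Coset"
begin

definition fin_gen_group :: "('a, 'b) monoid_scheme \<Rightarrow> bool" where
  "fin_gen_group G \<longleftrightarrow> group G \<and>
     (\<exists>S. finite S \<and> S \<subseteq> carrier G \<and> generate G S = carrier G)"

definition normal_fi_chain :: "('a, 'b) monoid_scheme \<Rightarrow> (nat \<Rightarrow> 'a set) \<Rightarrow> bool" where
  "normal_fi_chain G \<Gamma> \<longleftrightarrow> \<Gamma> 0 = carrier G \<and> (\<forall>n. \<Gamma> (Suc n) \<subseteq> \<Gamma> n)
     \<and> (\<forall>n. \<Gamma> n \<lhd> G) \<and> (\<forall>n. finite (rcosets\<^bsub>G\<^esub> (\<Gamma> n)))"

definition chain_index :: "('a, 'b) monoid_scheme \<Rightarrow> (nat \<Rightarrow> 'a set) \<Rightarrow> nat \<Rightarrow> nat" where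
  "chain_index G \<Gamma> n = card (rcosets\<^bsub>G\<^esub> (\<Gamma> n))"

text \<open>Boundary of the coset tree: infinite rays from the root, i.e. sequences of right
  cosets Gamma_n g_n with Gamma_(n+1) g_(n+1) contained in Gamma_n g_n.\<close>
definition tree_boundary :: "('a, 'b) monoid_scheme \<Rightarrow> (nat \<Rightarrow> 'a set) \<Rightarrow> (nat \<Rightarrow> 'a set) set" where
  "tree_boundary G \<Gamma> = {x. (\<forall>n. x n \<in> rcosets\<^bsub>G\<^esub> (\<Gamma> n)) \<and> (\<forall>n. x (Suc n) \<subseteq> x n)}"

definition shadow :: "('a, 'b) monoid_scheme \<Rightarrow> (nat \<Rightarrow> 'a set) \<Rightarrow> nat \<Rightarrow> 'a set \<Rightarrow> (nat \<Rightarrow> 'a set) set" where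
  "shadow G \<Gamma> n c = {x \<in> tree_boundary G \<Gamma>. x n = c}"

definition shadows :: "('a, 'b) monoid_scheme \<Rightarrow> (nat \<Rightarrow> 'a set) \<Rightarrow> (nat \<Rightarrow> 'a set) set set" where
  "shadows G \<Gamma> = {shadow G \<Gamma> n c | n c. c \<in> rcosets\<^bsub>G\<^esub> (\<Gamma> n)}"

text \<open>M is the boundary measure: Borel sigma-algebra generated by the shadows
  (which form a base of the topology), and mu(Sh(Gamma_n g)) = 1/|Gamma:Gamma_n|.
  (Such a measure exists and is unique by Caratheodory.)\<close>
definition is_boundary_measure ::
  "('a, 'b) monoid_scheme \<Rightarrow> (nat \<Rightarrow> 'a set) \<Rightarrow> (nat \<Rightarrow> 'a set) measure \<Rightarrow> bool" where
  "is_boundary_measure G \<Gamma> M \<longleftrightarrow>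
     space M = tree_boundary G \<Gamma> \<and>
     sets M = sigma_sets (tree_boundary G \<Gamma>) (shadows G \<Gamma>) \<and>
     (\<forall>n c. c \<in> rcosets\<^bsub>G\<^esub> (\<Gamma> n) \<longrightarrow>
        emeasure M (shadow G \<Gamma> n c) = ennreal (1 / real (chain_index G \<Gamma> n)))"

definition ray_act :: "('a, 'b) monoid_scheme \<Rightarrow> (nat \<Rightarrow> 'a set) \<Rightarrow> 'a \<Rightarrow> (nat \<Rightarrow> 'a set)" where
  "ray_act G x \<gamma> = (\<lambda>n. x n #>\<^bsub>G\<^esub> \<gamma>)"

definition set_act :: "('a, 'b) monoid_scheme \<Rightarrow> (nat \<Rightarrow> 'a set) set \<Rightarrow> 'a \<Rightarrow> (nat \<Rightarrow> 'a set) set" where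
  "set_act G A \<gamma> = (\<lambda>x. ray_act G x \<gamma>) ` A"

definition boundary_ergodic ::
  "('a, 'b) monoid_scheme \<Rightarrow> (nat \<Rightarrow> 'a set) measure \<Rightarrow> bool" where
  "boundary_ergodic G M \<longleftrightarrow>
     (\<forall>A \<in> sets M. (\<forall>\<gamma> \<in> carrier G. set_act G A \<gamma> = A) \<longrightarrow>
        measure M A = 0 \<or> measure M A = 1)"

definition strongly_ergodic ::
  "('a, 'b) monoid_scheme \<Rightarrow> (nat \<Rightarrow> 'a set) measure \<Rightarrow> bool" where
  "strongly_ergodic G M \<longleftrightarrow> boundary_ergodic G M \<and>
     (\<forall>A :: nat \<Rightarrow> (nat \<Rightarrow> 'a set) set. (\<forall>n. A n \<in> sets M) \<longrightarrow>
        (\<forall>\<gamma> \<in> carrier G. (\<lambda>n. measure M (A n - set_act G (A n) \<gamma>)) \<longlonglongrightarrow> 0) \<longrightarrow>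
        (\<lambda>n. measure M (A n) * (1 - measure M (A n))) \<longlonglongrightarrow> 0)"

definition spectral_gap ::
  "('a, 'b) monoid_scheme \<Rightarrow> (nat \<Rightarrow> 'a set) measure \<Rightarrow> bool" where
  "spectral_gap G M \<longleftrightarrow>
     \<not> (\<exists>A :: nat \<Rightarrow> (nat \<Rightarrow> 'a set) set.
          (\<forall>n. A n \<in> sets M \<and> 0 < measure M (A n) \<and> measure M (A n) \<le> 1/2) \<and>
          (\<forall>\<gamma> \<in> carrier G.
             (\<lambda>n. measure M (set_act G (A n) \<gamma> - A n) / measure M (A n)) \<longlonglongrightarrow> 0))"

end

theory Submission
  imports Defs
begin

no_notation Multiset.subset_mset (infix "<#" 50)



locale bnd = group G for G :: "('a,'b) monoid_scheme" (structure) +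
  fixes \<Gamma> :: "nat \<Rightarrow> 'a set" and M :: "(nat \<Rightarrow> 'a set) measure"
  assumes ch: "normal_fi_chain G \<Gamma>" and bm: "is_boundary_measure G \<Gamma> M"
begin

abbreviation "R n \<equiv> rcosets (\<Gamma> n)"
abbreviation "Bd \<equiv> tree_boundary G \<Gamma>"
abbreviation "N n \<equiv> chain_index G \<Gamma> n"

lemma nrm: "\<Gamma> n \<lhd> G" using ch unfolding normal_fi_chain_def by auto
lemma sbg: "subgroup (\<Gamma> n) G" using nrm normal_imp_subgroup by blast
lemma sub_car: "\<Gamma> n \<subseteq> carrier G" using sbg subgroup.subset by blast
lemma Gstep: "\<Gamma> (Suc n) \<subseteq> \<Gamma> n" using ch unfolding normal_fi_chain_def by auto
lemma Gmono: "m \<le> n \<Longrightarrow> \<Gamma> n \<subseteq> \<Gamma> m"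
proof (induction n)
  case 0 then show ?case by simp
next
  case (Suc n)
  show ?case
  proof (cases "m = Suc n")
    case False
    then have "m \<le> n" using Suc.prems by simp
    then show ?thesis using Suc.IH Gstep[of n] by blast
  qed simp
qed
lemma finR: "finite (R n)" using ch unfolding normal_fi_chain_def by auto
lemma R_mem: "c \<in> R n \<Longrightarrow> \<exists>h\<in>carrier G. c = \<Gamma> n #> h"
  unfolding RCOSETS_def by auto
lemma R_I: "h \<in> carrier G \<Longrightarrow> \<Gamma> n #> h \<in> R n"
  using rcosetsI sub_car by blast
lemma R_sub: "c \<in> R n \<Longrightarrow> c \<subseteq> carrier G"
  using R_mem r_coset_subset_G sub_car by blast
lemma R_ne: "c \<in> R n \<Longrightarrow> c \<noteq> {}"
  using R_mem rcos_self sbg by blast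
lemma R_disj: "c \<in> R n \<Longrightarrow> d \<in> R n \<Longrightarrow> c \<inter> d \<noteq> {} \<Longrightarrow> c = d"
  using rcos_disjoint[OF sbg] unfolding pairwise_def disjnt_def by blast
lemma Gam_R: "\<Gamma> n \<in> R n"
  using R_I[of \<one> n] sub_car by simp
lemma N_pos: "N n > 0"
  unfolding chain_index_def using finR Gam_R by (simp add: card_gt_0_iff) blast
lemma R0: "R 0 = {carrier G}"
proof -
  have "\<Gamma> 0 = carrier G" using ch unfolding normal_fi_chain_def by auto
  then show ?thesis unfolding RCOSETS_def
    using coset_join2[OF _ subgroup_self] by auto
qed

lemma lcos_R: "g \<in> carrier G \<Longrightarrow> h \<in> carrier G \<Longrightarrow> g <# (\<Gamma> n #> h) = \<Gamma> n #> (g \<otimes> h)"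
proof -
  assume g: "g \<in> carrier G" and h: "h \<in> carrier G"
  have "g <# (\<Gamma> n #> h) = (g <# \<Gamma> n) #> h" using coset_assoc g h sub_car by blast
  also have "g <# \<Gamma> n = \<Gamma> n #> g" using nrm g unfolding normal_def normal_axioms_def by auto
  also have "(\<Gamma> n #> g) #> h = \<Gamma> n #> (g \<otimes> h)" using coset_mult_assoc g h sub_car by blast
  finally show ?thesis .
qed

lemma parent_ex: "m \<le> n \<Longrightarrow> c \<in> R n \<Longrightarrow> \<exists>d\<in>R m. c \<subseteq> d"
proof -
  assume "m \<le> n" "c \<in> R n"
  then obtain h where h: "h \<in> carrier G" "c = \<Gamma> n #> h" using R_mem by blast
  have "c \<subseteq> \<Gamma> m #> h" using h Gmono[OF \<open>m \<le> n\<close>] unfolding r_coset_def by auto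
  then show ?thesis using R_I h by blast
qed

lemma parent_uniq: "c \<in> R n \<Longrightarrow> d \<in> R m \<Longrightarrow> d' \<in> R m \<Longrightarrow> c \<subseteq> d \<Longrightarrow> c \<subseteq> d' \<Longrightarrow> d = d'"
proof -
  assume a: "c \<in> R n" "d \<in> R m" "d' \<in> R m" "c \<subseteq> d" "c \<subseteq> d'"
  have "d \<inter> d' \<noteq> {}" using R_ne[OF a(1)] a(4,5) by blast
  then show ?thesis using R_disj a(2,3) by blast
qed

lemma bd_mem: "x \<in> Bd \<Longrightarrow> x n \<in> R n"
  unfolding tree_boundary_def by auto
lemma bd_step: "x \<in> Bd \<Longrightarrow> x (Suc n) \<subseteq> x n"
  unfolding tree_boundary_def by auto
lemma bd_mono: "x \<in> Bd \<Longrightarrow> m \<le> n \<Longrightarrow> x n \<subseteq> x m"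
proof (induction n)
  case 0 then show ?case by simp
next
  case (Suc n)
  show ?case
  proof (cases "m = Suc n")
    case False
    then have "m \<le> n" using Suc.prems by simp
    then show ?thesis using Suc.IH Suc.prems(1) bd_step[OF Suc.prems(1), of n] by blast
  qed simp
qed

definition ray_of :: "'a \<Rightarrow> nat \<Rightarrow> 'a set" where "ray_of h = (\<lambda>k. \<Gamma> k #> h)"
lemma ray_of_bd: "h \<in> carrier G \<Longrightarrow> ray_of h \<in> Bd"
  unfolding tree_boundary_def ray_of_def using R_I Gmono[of n "Suc n" for n]
  unfolding r_coset_def by fastforce

lemma shadow_ne: "c \<in> R n \<Longrightarrow> shadow G \<Gamma> n c \<noteq> {}"
proof -
  assume "c \<in> R n"
  then obtain h where h: "h \<in> carrier G" "c = \<Gamma> n #> h" using R_mem by blast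
  then have "ray_of h \<in> shadow G \<Gamma> n c" unfolding shadow_def using ray_of_bd ray_of_def by auto
  then show ?thesis by blast
qed

lemma shadow_Int: "m \<le> n \<Longrightarrow> c \<in> R n \<Longrightarrow> d \<in> R m \<Longrightarrow>
  shadow G \<Gamma> n c \<inter> shadow G \<Gamma> m d = (if c \<subseteq> d then shadow G \<Gamma> n c else {})"
proof -
  assume mn: "m \<le> n" and c: "c \<in> R n" and d: "d \<in> R m"
  show ?thesis
  proof (cases "c \<subseteq> d")
    case True
    have "x m = d" if "x \<in> Bd" "x n = c" for x
      using parent_uniq[OF c d bd_mem[OF that(1)] True] bd_mono[OF that(1) mn] that by auto
    then show ?thesis using True unfolding shadow_def by auto
  next
    case False
    have "x n \<subseteq> x m" if "x \<in> Bd" for x using bd_mono that mn by auto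
    then show ?thesis using False unfolding shadow_def by auto
  qed
qed

end



context bnd begin

lemma spM: "space M = Bd" and sM: "sets M = sigma_sets Bd (shadows G \<Gamma>)"
  and emM: "c \<in> R n \<Longrightarrow> emeasure M (shadow G \<Gamma> n c) = ennreal (1 / real (N n))"
  using bm unfolding is_boundary_measure_def by auto

lemma shadows_Pow: "shadows G \<Gamma> \<subseteq> Pow Bd"
  unfolding shadows_def shadow_def by auto

lemma shadow_sets: "c \<in> R n \<Longrightarrow> shadow G \<Gamma> n c \<in> sets M"
  unfolding sM shadows_def by (rule sigma_sets.Basic) blast

lemma shadow0: "shadow G \<Gamma> 0 (carrier G) = Bd"
  unfolding shadow_def using bd_mem[of _ 0] R0 by auto

lemma N0: "N 0 = 1" unfolding chain_index_def R0 by simp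

lemma prob: "prob_space M"
proof
  have "emeasure M (space M) = emeasure M (shadow G \<Gamma> 0 (carrier G))" using shadow0 spM by simp
  also have "\<dots> = 1" using emM[of "carrier G" 0] R0 N0 by simp
  finally show "emeasure M (space M) = 1" .
qed

sublocale P: prob_space M by (rule prob)

lemma meas_shadow: assumes "c \<in> R n" shows "measure M (shadow G \<Gamma> n c) = 1 / real (N n)"
  unfolding measure_def emM[OF assms] by (rule enn2real_ennreal) simp

definition "E0 = insert {} (shadows G \<Gamma>)"

lemma E0_Int_stable: "Int_stable E0"
proof (rule Int_stableI)
  fix a b assume a: "a \<in> E0" and b: "b \<in> E0"
  show "a \<inter> b \<in> E0"
  proof (cases "a = {} \<or> b = {}")
    case True then show ?thesis unfolding E0_def by auto
  next
    case False
    then obtain n c m d where ab: "a = shadow G \<Gamma> n c" "c \<in> R n" "b = shadow G \<Gamma> m d" "d \<in> R m"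
      using a b unfolding E0_def shadows_def by auto
    show ?thesis
    proof (cases "m \<le> n")
      case True
      then show ?thesis using shadow_Int[OF True ab(2) ab(4)] ab unfolding E0_def shadows_def by auto
    next
      case False
      then have nm: "n \<le> m" by simp
      show ?thesis using shadow_Int[OF nm ab(4) ab(2)] ab unfolding E0_def shadows_def
        by (auto simp: Int_commute)
    qed
  qed
qed

lemma E0_sigma: "sigma_sets Bd E0 = sigma_sets Bd (shadows G \<Gamma>)"
proof
  show "sigma_sets Bd E0 \<subseteq> sigma_sets Bd (shadows G \<Gamma>)"
    unfolding E0_def by (rule sigma_sets_mono) (auto intro: sigma_sets.Empty sigma_sets.Basic)
next
  show "sigma_sets Bd (shadows G \<Gamma>) \<subseteq> sigma_sets Bd E0"
    unfolding E0_def by (rule sigma_sets_mono') auto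
qed

definition cm_ok :: "('a set \<Rightarrow> 'a set) \<Rightarrow> ('a set \<Rightarrow> 'a set) \<Rightarrow> bool" where
  "cm_ok \<phi> \<psi> \<longleftrightarrow> (\<forall>n c. c \<in> R n \<longrightarrow> \<phi> c \<in> R n \<and> \<psi> c \<in> R n \<and> \<psi> (\<phi> c) = c \<and> \<phi> (\<psi> c) = c)
     \<and> (\<forall>c d. c \<subseteq> d \<longrightarrow> \<phi> c \<subseteq> \<phi> d \<and> \<psi> c \<subseteq> \<psi> d)"

lemma cmD: assumes "cm_ok \<phi> \<psi>" "c \<in> R n"
  shows "\<phi> c \<in> R n" "\<psi> c \<in> R n" "\<psi> (\<phi> c) = c" "\<phi> (\<psi> c) = c"
proof -
  have "\<forall>n c. c \<in> R n \<longrightarrow> \<phi> c \<in> R n \<and> \<psi> c \<in> R n \<and> \<psi> (\<phi> c) = c \<and> \<phi> (\<psi> c) = c"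
    using assms(1) unfolding cm_ok_def by (rule conjunct1)
  then have "\<phi> c \<in> R n \<and> \<psi> c \<in> R n \<and> \<psi> (\<phi> c) = c \<and> \<phi> (\<psi> c) = c" using assms(2) by simp
  then show "\<phi> c \<in> R n" "\<psi> c \<in> R n" "\<psi> (\<phi> c) = c" "\<phi> (\<psi> c) = c" by simp_all
qed

lemma cm_mono: assumes "cm_ok \<phi> \<psi>" "c \<subseteq> d" shows "\<phi> c \<subseteq> \<phi> d" "\<psi> c \<subseteq> \<psi> d"
proof -
  have "\<forall>c d. c \<subseteq> d \<longrightarrow> \<phi> c \<subseteq> \<phi> d \<and> \<psi> c \<subseteq> \<psi> d"
    using assms(1) unfolding cm_ok_def by (rule conjunct2)
  then show "\<phi> c \<subseteq> \<phi> d" "\<psi> c \<subseteq> \<psi> d" using assms(2) by simp_all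
qed

lemma cm_sym: assumes "cm_ok \<phi> \<psi>" shows "cm_ok \<psi> \<phi>"
  unfolding cm_ok_def using cmD[OF assms] cm_mono[OF assms] by simp

definition lift :: "('a set \<Rightarrow> 'a set) \<Rightarrow> (nat \<Rightarrow> 'a set) \<Rightarrow> (nat \<Rightarrow> 'a set)" where
  "lift \<phi> x = (\<lambda>n. \<phi> (x n))"

lemma lift_bd: assumes "cm_ok \<phi> \<psi>" "x \<in> Bd" shows "lift \<phi> x \<in> Bd"
proof -
  have "\<phi> (x n) \<in> R n" for n using cmD(1)[OF assms(1) bd_mem[OF assms(2)]] .
  moreover have "\<phi> (x (Suc n)) \<subseteq> \<phi> (x n)" for n using cm_mono(1)[OF assms(1) bd_step[OF assms(2)]] .
  ultimately show ?thesis unfolding tree_boundary_def lift_def by simp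
qed

lemma lift_inv: assumes "cm_ok \<phi> \<psi>" "x \<in> Bd" shows "lift \<psi> (lift \<phi> x) = x"
proof
  fix n show "lift \<psi> (lift \<phi> x) n = x n" using cmD(3)[OF assms(1) bd_mem[OF assms(2)]]
    unfolding lift_def .
qed

lemma lift_vimage: assumes "cm_ok \<phi> \<psi>" "c \<in> R n"
  shows "lift \<phi> -` shadow G \<Gamma> n c \<inter> Bd = shadow G \<Gamma> n (\<psi> c)"
proof -
  have "lift \<phi> x \<in> shadow G \<Gamma> n c \<longleftrightarrow> x \<in> shadow G \<Gamma> n (\<psi> c)" if x: "x \<in> Bd" for x
  proof -
    have xn: "x n \<in> R n" using bd_mem x by blast
    have "\<phi> (x n) = c \<longleftrightarrow> x n = \<psi> c"
    proof
      assume "\<phi> (x n) = c" then show "x n = \<psi> c" using cmD(3)[OF assms(1) xn] by simp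
    next
      assume "x n = \<psi> c" then show "\<phi> (x n) = c" using cmD(4)[OF assms] by simp
    qed
    then show ?thesis using lift_bd[OF assms(1) x] x unfolding shadow_def lift_def by simp
  qed
  then show ?thesis unfolding shadow_def by blast
qed

lemma lift_meas: assumes "cm_ok \<phi> \<psi>" shows "lift \<phi> \<in> measurable M M"
proof (rule measurable_sigma_sets[OF sM shadows_Pow])
  show "lift \<phi> \<in> space M \<rightarrow> Bd" using lift_bd[OF assms] spM by auto
next
  fix y assume "y \<in> shadows G \<Gamma>"
  then obtain n c where y: "y = shadow G \<Gamma> n c" "c \<in> R n" unfolding shadows_def by blast
  have "lift \<phi> -` y \<inter> space M = shadow G \<Gamma> n (\<psi> c)" using lift_vimage[OF assms y(2)] y spM by simp
  then show "lift \<phi> -` y \<inter> space M \<in> sets M"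
    using shadow_sets[OF cmD(2)[OF assms y(2)]] by simp
qed

lemma lift_distr: assumes "cm_ok \<phi> \<psi>" shows "distr M M (lift \<phi>) = M"
proof (rule measure_eqI_generator_eq[OF E0_Int_stable, of Bd _ _ "\<lambda>_. Bd"])
  show "E0 \<subseteq> Pow Bd" unfolding E0_def using shadows_Pow by auto
  show "sets (distr M M (lift \<phi>)) = sigma_sets Bd E0" using E0_sigma sM by simp
  show "sets M = sigma_sets Bd E0" using E0_sigma sM by simp
  show "range (\<lambda>_. Bd) \<subseteq> E0" unfolding E0_def shadows_def using shadow0[symmetric] R0 by blast
  show "(\<Union>i. Bd) = Bd" by simp
  have "emeasure (distr M M (lift \<phi>)) Bd = emeasure M (lift \<phi> -` Bd \<inter> space M)"
  proof -
    have "Bd \<in> sets M" using sets.top[of M] spM by simp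
    then show ?thesis using emeasure_distr[OF lift_meas[OF assms]] by simp
  qed
  then show "emeasure (distr M M (lift \<phi>)) Bd \<noteq> \<infinity>" using P.emeasure_finite by simp
  fix X assume "X \<in> E0"
  then show "emeasure (distr M M (lift \<phi>)) X = emeasure M X"
  proof (cases "X = {}")
    case False
    then obtain n c where X: "X = shadow G \<Gamma> n c" "c \<in> R n"
      using \<open>X \<in> E0\<close> unfolding E0_def shadows_def by blast
    have "emeasure (distr M M (lift \<phi>)) X = emeasure M (lift \<phi> -` X \<inter> space M)"
      using X shadow_sets lift_meas[OF assms] by (simp add: emeasure_distr)
    also have "\<dots> = emeasure M (shadow G \<Gamma> n (\<psi> c))" using lift_vimage[OF assms X(2)] X spM by simp
    also have "\<dots> = emeasure M X" using emM X cmD(2)[OF assms X(2)] by simp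
    finally show ?thesis .
  qed simp
qed

lemma lift_image: assumes "cm_ok \<phi> \<psi>" "A \<subseteq> Bd"
  shows "lift \<phi> ` A = lift \<psi> -` A \<inter> Bd"
proof
  show "lift \<phi> ` A \<subseteq> lift \<psi> -` A \<inter> Bd"
    using assms lift_inv lift_bd by blast
next
  show "lift \<psi> -` A \<inter> Bd \<subseteq> lift \<phi> ` A"
  proof
    fix y assume y: "y \<in> lift \<psi> -` A \<inter> Bd"
    then have "y = lift \<phi> (lift \<psi> y)" using lift_inv[OF cm_sym[OF assms(1)]] by auto
    then show "y \<in> lift \<phi> ` A" using y by blast
  qed
qed

lemma lift_image_sets: assumes "cm_ok \<phi> \<psi>" "A \<in> sets M"
  shows "lift \<phi> ` A \<in> sets M" and "measure M (lift \<phi> ` A) = measure M A"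
proof -
  have Ab: "A \<subseteq> Bd" using sets.sets_into_space[OF assms(2)] spM by simp
  have eq: "lift \<phi> ` A = lift \<psi> -` A \<inter> space M" using lift_image[OF assms(1) Ab] spM by simp
  show "lift \<phi> ` A \<in> sets M" unfolding eq
    using lift_meas[OF cm_sym[OF assms(1)]] assms(2) by (rule measurable_sets)
  have "measure M A = measure (distr M M (lift \<psi>)) A" using lift_distr[OF cm_sym[OF assms(1)]] by simp
  also have "\<dots> = measure M (lift \<psi> -` A \<inter> space M)"
    using lift_meas[OF cm_sym[OF assms(1)]] assms(2) by (rule measure_distr)
  finally show "measure M (lift \<phi> ` A) = measure M A" unfolding eq by (rule sym)
qed

lemma lift_inj: assumes "cm_ok \<phi> \<psi>" shows "inj_on (lift \<phi>) Bd"
proof (rule inj_onI)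
  fix x y assume "x \<in> Bd" "y \<in> Bd" "lift \<phi> x = lift \<phi> y"
  then show "x = y" using lift_inv[OF assms] by metis
qed

end


context bnd begin

lemma cm_okI:
  assumes "\<And>n c. c \<in> R n \<Longrightarrow> \<phi> c \<in> R n" "\<And>n c. c \<in> R n \<Longrightarrow> \<psi> c \<in> R n"
    "\<And>n c. c \<in> R n \<Longrightarrow> \<psi> (\<phi> c) = c" "\<And>n c. c \<in> R n \<Longrightarrow> \<phi> (\<psi> c) = c"
    "\<And>c d. c \<subseteq> d \<Longrightarrow> \<phi> c \<subseteq> \<phi> d" "\<And>c d. c \<subseteq> d \<Longrightarrow> \<psi> c \<subseteq> \<psi> d"
  shows "cm_ok \<phi> \<psi>"
  unfolding cm_ok_def using assms by simp

lemma cm_right: assumes g: "\<gamma> \<in> carrier G" shows "cm_ok (\<lambda>c. c #> \<gamma>) (\<lambda>c. c #> inv \<gamma>)"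
proof (rule cm_okI)
  fix n c assume c: "c \<in> R n"
  obtain h where h: "h \<in> carrier G" "c = \<Gamma> n #> h" using R_mem c by blast
  have "c #> \<gamma> = \<Gamma> n #> (h \<otimes> \<gamma>)" using h g coset_mult_assoc[OF sub_car] by simp
  then show "c #> \<gamma> \<in> R n" using R_I h g by simp
  have "c #> inv \<gamma> = \<Gamma> n #> (h \<otimes> inv \<gamma>)" using h g coset_mult_assoc[OF sub_car] by simp
  then show "c #> inv \<gamma> \<in> R n" using R_I h g by simp
  have cs: "c \<subseteq> carrier G" using R_sub[OF c] .
  show "c #> \<gamma> #> inv \<gamma> = c" using g coset_mult_assoc[OF cs] cs by simp
  show "c #> inv \<gamma> #> \<gamma> = c" using g coset_mult_assoc[OF cs] cs by simp
next
  fix c d :: "'a set" assume "c \<subseteq> d"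
  then show "c #> \<gamma> \<subseteq> d #> \<gamma>" "c #> inv \<gamma> \<subseteq> d #> inv \<gamma>" unfolding r_coset_def by auto
qed

lemma cm_left: assumes g: "g \<in> carrier G" shows "cm_ok (\<lambda>c. g <# c) (\<lambda>c. inv g <# c)"
proof (rule cm_okI)
  fix n c assume c: "c \<in> R n"
  obtain h where h: "h \<in> carrier G" "c = \<Gamma> n #> h" using R_mem c by blast
  show "g <# c \<in> R n" using h g lcos_R R_I by simp
  show "inv g <# c \<in> R n" using h g lcos_R R_I by simp
  have cs: "c \<subseteq> carrier G" using R_sub[OF c] .
  show "inv g <# (g <# c) = c" using g lcos_m_assoc[OF cs] lcos_mult_one[OF cs] by simp
  show "g <# (inv g <# c) = c" using g lcos_m_assoc[OF cs] lcos_mult_one[OF cs] by simp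
next
  fix c d :: "'a set" assume "c \<subseteq> d"
  then show "g <# c \<subseteq> g <# d" "inv g <# c \<subseteq> inv g <# d" unfolding l_coset_def by auto
qed

lemma ray_act_lift: "ray_act G x \<gamma> = lift (\<lambda>c. c #> \<gamma>) x"
  unfolding ray_act_def lift_def by simp

lemma set_act_lift: "set_act G A \<gamma> = lift (\<lambda>c. c #> \<gamma>) ` A"
  unfolding set_act_def ray_act_lift by simp

end


context bnd begin

definition cyl :: "nat \<Rightarrow> 'a set set \<Rightarrow> (nat \<Rightarrow> 'a set) set" where
  "cyl L S = {x \<in> Bd. x L \<in> S}"

lemma cyl_UN: "cyl L S = (\<Union>c\<in>S. shadow G \<Gamma> L c)"
  unfolding cyl_def shadow_def by auto

lemma cyl_sets: assumes "S \<subseteq> R L" shows "cyl L S \<in> sets M"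
proof -
  have "finite S" using finR assms finite_subset by blast
  then show ?thesis unfolding cyl_UN using assms shadow_sets by (intro sets.finite_UN) auto
qed

lemma cyl_meas: assumes "S \<subseteq> R L" shows "measure M (cyl L S) = card S / N L"
proof -
  have fS: "finite S" using finR assms finite_subset by blast
  have "measure M (cyl L S) = (\<Sum>c\<in>S. measure M (shadow G \<Gamma> L c))"
    unfolding cyl_UN
  proof (rule P.finite_measure_finite_Union[OF fS])
    show "(\<lambda>c. shadow G \<Gamma> L c) ` S \<subseteq> sets M" using assms shadow_sets by auto
    show "disjoint_family_on (\<lambda>c. shadow G \<Gamma> L c) S"
      unfolding disjoint_family_on_def shadow_def by auto
  qed
  also have "\<dots> = (\<Sum>c\<in>S. 1 / real (N L))" using assms meas_shadow by (intro sum.cong) auto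
  finally show ?thesis by simp
qed

lemma cyl_compl: "S \<subseteq> R L \<Longrightarrow> Bd - cyl L S = cyl L (R L - S)"
  unfolding cyl_def using bd_mem by auto

lemma cyl_Un: "cyl L S \<union> cyl L T = cyl L (S \<union> T)"
  unfolding cyl_def by auto

lemma cyl_Int: "cyl L S \<inter> cyl L T = cyl L (S \<inter> T)"
  unfolding cyl_def by auto

lemma cyl_UNI: "(\<Union>i\<in>I. cyl L (S i)) = cyl L (\<Union>i\<in>I. S i)"
  unfolding cyl_def by auto

lemma cyl_refine: assumes "L \<le> L'" "S \<subseteq> R L"
  shows "cyl L S = cyl L' {d \<in> R L'. \<exists>c\<in>S. d \<subseteq> c}"
proof -
  have "x L \<in> S \<longleftrightarrow> (\<exists>c\<in>S. x L' \<subseteq> c)" if x: "x \<in> Bd" for x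
  proof
    assume "x L \<in> S" then show "\<exists>c\<in>S. x L' \<subseteq> c" using bd_mono[OF x assms(1)] by blast
  next
    assume "\<exists>c\<in>S. x L' \<subseteq> c"
    then obtain c where c: "c \<in> S" "x L' \<subseteq> c" by blast
    have "x L = c" using parent_uniq[OF bd_mem[OF x] bd_mem[OF x] _ bd_mono[OF x assms(1)] c(2)] c(1) assms(2)
      by blast
    then show "x L \<in> S" using c by simp
  qed
  then show ?thesis unfolding cyl_def using bd_mem by blast
qed

definition symd :: "'x set \<Rightarrow> 'x set \<Rightarrow> 'x set" where "symd A B = (A - B) \<union> (B - A)"

definition apx :: "(nat \<Rightarrow> 'a set) set \<Rightarrow> bool" where
  "apx A \<longleftrightarrow> (\<forall>e>0. \<exists>L S. S \<subseteq> R L \<and> measure M (symd A (cyl L S)) < e)"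

lemma symd_sets: "A \<in> sets M \<Longrightarrow> B \<in> sets M \<Longrightarrow> symd A B \<in> sets M"
  unfolding symd_def by auto

lemma apx_refine: assumes "apx A" "A \<in> sets M" "e > 0"
  shows "\<exists>L0. \<forall>L\<ge>L0. \<exists>S \<subseteq> R L. measure M (symd A (cyl L S)) < e"
proof -
  obtain L0 S where S: "S \<subseteq> R L0" "measure M (symd A (cyl L0 S)) < e" using assms unfolding apx_def by blast
  have "\<exists>S' \<subseteq> R L. measure M (symd A (cyl L S')) < e" if "L \<ge> L0" for L
    using cyl_refine[OF that S(1)] S(2) by (intro exI[of _ "{d \<in> R L. \<exists>c\<in>S. d \<subseteq> c}"]) auto
  then show ?thesis by blast
qed

lemma msub: "A \<in> sets M \<Longrightarrow> B \<in> sets M \<Longrightarrow> measure M (A \<union> B) \<le> measure M A + measure M B"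
  by (rule measure_subadditive) (auto simp: P.emeasure_finite)

lemma sets_Bd: "A \<in> sets M \<Longrightarrow> A \<subseteq> Bd"
  using sets.sets_into_space spM by blast

lemma apx_all: assumes "A \<in> sets M" shows "apx A"
proof -
  have "A \<in> sigma_sets Bd (shadows G \<Gamma>)" using assms sM by simp
  then show ?thesis
  proof (induction rule: sigma_sets.induct)
    case (Basic a)
    then obtain n c where a: "a = shadow G \<Gamma> n c" "c \<in> R n" unfolding shadows_def by blast
    have "a = cyl n {c}" unfolding a cyl_def shadow_def by auto
    then have "symd a (cyl n {c}) = {}" unfolding symd_def by simp
    then show ?case unfolding apx_def using a(2) by (intro allI impI exI[of _ n] exI[of _ "{c}"]) auto
  next
    case Empty
    have "symd {} (cyl 0 {}) = {}" unfolding symd_def cyl_def by simp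
    then show ?case unfolding apx_def by (intro allI impI exI[of _ 0] exI[of _ "{}"]) auto
  next
    case (Compl a)
    have aB: "a \<subseteq> Bd" using Compl.hyps sigma_sets_into_sp[OF shadows_Pow] by blast
    show ?case unfolding apx_def
    proof (intro allI impI)
      fix e :: real assume "e > 0"
      then obtain L S where S: "S \<subseteq> R L" "measure M (symd a (cyl L S)) < e"
        using Compl.IH unfolding apx_def by blast
      have "symd (Bd - a) (cyl L (R L - S)) = symd a (cyl L S)"
        using cyl_compl[OF S(1)] aB unfolding symd_def cyl_def by auto
      then show "\<exists>L S. S \<subseteq> R L \<and> measure M (symd (Bd - a) (cyl L S)) < e" using S
        by (intro exI[of _ L] exI[of _ "R L - S"]) auto
    qed
  next
    case (Union a)
    have as: "a i \<in> sets M" for i using Union.hyps sM by simp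
    define U where "U = (\<Union>i. a i)"
    define P where "P k = (\<Union>i<k. a i)" for k
    have Us: "U \<in> sets M" unfolding U_def using as by auto
    have Ps: "P k \<in> sets M" for k unfolding P_def using as by auto
    have PU: "(\<Union>k. P k) = U" unfolding P_def U_def by auto
    have "(\<lambda>k. measure M (P k)) \<longlonglongrightarrow> measure M (\<Union>k. P k)"
    proof (rule Lim_measure_incseq)
      show "range P \<subseteq> sets M" using Ps by auto
      show "incseq P" unfolding incseq_def P_def by force
      show "emeasure M (\<Union>k. P k) \<noteq> \<infinity>" by (simp add: P.emeasure_finite)
    qed
    then have lim: "(\<lambda>k. measure M (P k)) \<longlonglongrightarrow> measure M U" using PU by simp
    show ?case unfolding apx_def
    proof (intro allI impI)
      fix e :: real assume e: "e > 0"
      obtain k where k: "\<bar>measure M (P k) - measure M U\<bar> < e/2"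
        using lim e unfolding LIMSEQ_def dist_real_def by (metis half_gt_zero order.refl)
      have kU: "measure M (U - P k) < e/2"
      proof -
        have "P k \<subseteq> U" unfolding P_def U_def by auto
        then have "measure M (U - P k) = measure M U - measure M (P k)"
          using P.finite_measure_Diff[OF Us Ps] by simp
        then show ?thesis using k by (simp add: abs_if split: if_splits)
      qed
      define d where "d = e / (2 * (real k + 1))"
      have d: "d > 0" unfolding d_def using e by simp
      have "\<forall>i\<in>{..<k}. \<exists>L0. \<forall>L\<ge>L0. \<exists>S \<subseteq> R L. measure M (symd (a i) (cyl L S)) < d"
        using apx_refine[OF Union.IH as d] by blast
      then obtain L0 where L0: "\<forall>i\<in>{..<k}. \<forall>L\<ge>L0 i. \<exists>S \<subseteq> R L. measure M (symd (a i) (cyl L S)) < d"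
        by (metis bchoice)
      define L where "L = (\<Sum>i<k. L0 i)"
      have "L0 i \<le> L" if "i < k" for i
        unfolding L_def using that by (intro member_le_sum) auto
      then have "\<forall>i\<in>{..<k}. \<exists>S. S \<subseteq> R L \<and> measure M (symd (a i) (cyl L S)) < d"
        using L0 by blast
      then obtain S where S: "\<forall>i\<in>{..<k}. S i \<subseteq> R L \<and> measure M (symd (a i) (cyl L (S i))) < d"
        by (metis bchoice)
      define T where "T = (\<Union>i<k. S i)"
      have T: "T \<subseteq> R L" unfolding T_def using S by auto
      have sub: "symd U (cyl L T) \<subseteq> (U - P k) \<union> (\<Union>i<k. symd (a i) (cyl L (S i)))"
        unfolding symd_def U_def P_def T_def cyl_UNI[symmetric] by blast
      have sets1: "(\<lambda>i. symd (a i) (cyl L (S i))) ` {..<k} \<subseteq> sets M"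
        using S as cyl_sets symd_sets by auto
      have "measure M (symd U (cyl L T)) \<le> measure M ((U - P k) \<union> (\<Union>i<k. symd (a i) (cyl L (S i))))"
        using sub sets1 Us Ps by (intro P.finite_measure_mono) auto
      also have "\<dots> \<le> measure M (U - P k) + measure M (\<Union>i<k. symd (a i) (cyl L (S i)))"
        using sets1 Us Ps by (intro msub) auto
      also have "measure M (\<Union>i<k. symd (a i) (cyl L (S i))) \<le> (\<Sum>i<k. measure M (symd (a i) (cyl L (S i))))"
        using sets1 by (intro P.finite_measure_subadditive_finite) auto
      also have "\<dots> \<le> (\<Sum>i<k. d)" using S by (intro sum_mono) (auto intro: less_imp_le)
      also have "\<dots> = real k * d" by simp
      also have "real k * d \<le> e / 2" unfolding d_def using e
        by (simp add: field_simps)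
      finally have "measure M (symd U (cyl L T)) < e" using kU by linarith
      then show "\<exists>L S. S \<subseteq> R L \<and> measure M (symd (\<Union>i. a i) (cyl L S)) < e"
        using T unfolding U_def by blast
    qed
  qed
qed

end


context bnd begin

definition ls :: "'a \<Rightarrow> (nat \<Rightarrow> 'a set) set \<Rightarrow> (nat \<Rightarrow> 'a set) set" where
  "ls g A = lift (\<lambda>c. g <# c) ` A"

lemma ls_sets: assumes "g \<in> carrier G" "A \<in> sets M"
  shows "ls g A \<in> sets M" "measure M (ls g A) = measure M A"
  unfolding ls_def using lift_image_sets[OF cm_left[OF assms(1)] assms(2)] by auto

lemma cyl_Bd: "cyl L S \<subseteq> Bd" unfolding cyl_def by blast

lemma ls_cyl: assumes g: "g \<in> carrier G" and S: "S \<subseteq> R L"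
  shows "ls g (cyl L S) = cyl L ((\<lambda>c. g <# c) ` S)"
proof -
  have cm: "cm_ok (\<lambda>c. g <# c) (\<lambda>c. inv g <# c)" using cm_left[OF g] .
  have 1: "ls g (cyl L S) = lift (\<lambda>c. inv g <# c) -` cyl L S \<inter> Bd"
    unfolding ls_def by (rule lift_image[OF cm cyl_Bd])
  have key: "inv g <# x L \<in> S \<longleftrightarrow> x L \<in> (\<lambda>c. g <# c) ` S" if x: "x \<in> Bd" for x
  proof
    assume a: "inv g <# x L \<in> S"
    have "g <# (inv g <# x L) = x L" by (rule cmD(4)[OF cm bd_mem[OF x]])
    then show "x L \<in> (\<lambda>c. g <# c) ` S" using a by (metis image_eqI)
  next
    assume "x L \<in> (\<lambda>c. g <# c) ` S"
    then obtain c where c: "c \<in> S" "x L = g <# c" by blast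
    have "inv g <# (g <# c) = c" using cmD(3)[OF cm] c(1) S by blast
    then show "inv g <# x L \<in> S" using c by simp
  qed
  have 2: "lift (\<lambda>c. inv g <# c) x \<in> Bd" if "x \<in> Bd" for x using lift_bd[OF cm_sym[OF cm] that] .
  have 3: "lift (\<lambda>c. inv g <# c) x L = inv g <# x L" for x unfolding lift_def by (rule refl)
  show ?thesis unfolding 1
  proof (intro equalityI subsetI)
    fix x assume "x \<in> lift (\<lambda>c. inv g <# c) -` cyl L S \<inter> Bd"
    then have "x \<in> Bd" "inv g <# x L \<in> S" unfolding cyl_def lift_def by auto
    then show "x \<in> cyl L ((\<lambda>c. g <# c) ` S)" unfolding cyl_def using key by blast
  next
    fix x assume "x \<in> cyl L ((\<lambda>c. g <# c) ` S)"
    then have "x \<in> Bd" "x L \<in> (\<lambda>c. g <# c) ` S" unfolding cyl_def by auto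
    then show "x \<in> lift (\<lambda>c. inv g <# c) -` cyl L S \<inter> Bd" unfolding cyl_def using key 2 3 by auto
  qed
qed

definition rep :: "nat \<Rightarrow> 'a set \<Rightarrow> 'a" where
  "rep L r = (SOME h. h \<in> carrier G \<and> r = \<Gamma> L #> h)"

lemma rep: assumes "r \<in> R L" shows "rep L r \<in> carrier G" "r = \<Gamma> L #> rep L r"
proof -
  have "\<exists>h. h \<in> carrier G \<and> r = \<Gamma> L #> h" using R_mem[OF assms] by blast
  then have "rep L r \<in> carrier G \<and> r = \<Gamma> L #> rep L r" unfolding rep_def by (rule someI_ex)
  then show "rep L r \<in> carrier G" "r = \<Gamma> L #> rep L r" by (rule conjunct1, rule conjunct2)
qed

lemma card_filter_sum: "finite A \<Longrightarrow> card {x\<in>A. P x} = (\<Sum>x\<in>A. if P x then 1 else 0)"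
proof -
  assume "finite A"
  have "card {x\<in>A. P x} = (\<Sum>x\<in>{x\<in>A. P x}. 1)" by (rule card_eq_sum)
  also have "\<dots> = (\<Sum>x\<in>A. if P x then 1 else 0)" by (rule sum.inter_filter[OF \<open>finite A\<close>])
  finally show ?thesis .
qed

lemma count_fixed: assumes c: "c \<in> R L" and T: "T \<subseteq> R L"
  shows "card {r \<in> R L. rep L r <# c \<in> T} = card T"
proof -
  define f where "f r = rep L r <# c" for r
  obtain h where h: "h \<in> carrier G" "c = \<Gamma> L #> h" using R_mem[OF c] by blast
  have fr: "f r = \<Gamma> L #> (rep L r \<otimes> h)" if "r \<in> R L" for r
  proof -
    have "f r = rep L r <# (\<Gamma> L #> h)" unfolding f_def h(2) by (rule refl)
    also have "\<dots> = \<Gamma> L #> (rep L r \<otimes> h)" by (rule lcos_R[OF rep(1)[OF that] h(1)])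
    finally show ?thesis .
  qed
  have fR: "f r \<in> R L" if "r \<in> R L" for r
    unfolding fr[OF that] by (rule R_I) (use rep(1)[OF that] h(1) in simp)
  have bk: "f r #> inv h = \<Gamma> L #> rep L r" if r: "r \<in> R L" for r
  proof -
    have "f r #> inv h = \<Gamma> L #> (rep L r \<otimes> h \<otimes> inv h)"
      unfolding fr[OF r] using coset_mult_assoc[OF sub_car] rep(1)[OF r] h(1) by simp
    also have "rep L r \<otimes> h \<otimes> inv h = rep L r" using rep(1)[OF r] h(1) by (simp add: m_assoc)
    finally show ?thesis .
  qed
  have inj: "inj_on f (R L)"
  proof (rule inj_onI)
    fix r r' assume r: "r \<in> R L" and r': "r' \<in> R L" and eq: "f r = f r'"
    have "r = \<Gamma> L #> rep L r" by (rule rep(2)[OF r])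
    also have "\<dots> = f r #> inv h" using bk[OF r] by (rule sym)
    also have "\<dots> = f r' #> inv h" using eq by (rule arg_cong)
    also have "\<dots> = \<Gamma> L #> rep L r'" by (rule bk[OF r'])
    also have "\<dots> = r'" by (rule rep(2)[OF r', symmetric])
    finally show "r = r'" .
  qed
  have sub: "f ` R L \<subseteq> R L" using fR by blast
  have surj: "f ` R L = R L" by (rule endo_inj_surj[OF finR sub inj])
  have im: "f ` {r \<in> R L. f r \<in> T} = T"
  proof
    show "f ` {r \<in> R L. f r \<in> T} \<subseteq> T" by blast
    show "T \<subseteq> f ` {r \<in> R L. f r \<in> T}"
    proof
      fix t assume t: "t \<in> T"
      then have "t \<in> f ` R L" using surj T by blast
      then obtain r where "r \<in> R L" "t = f r" by blast
      then show "t \<in> f ` {r \<in> R L. f r \<in> T}" using t by blast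
    qed
  qed
  have inj2: "inj_on f {r \<in> R L. f r \<in> T}" using inj by (rule inj_on_subset) blast
  have "card T = card {r \<in> R L. f r \<in> T}" using card_image[OF inj2] im by simp
  then show ?thesis unfolding f_def by simp
qed

lemma count_sum: assumes S: "S \<subseteq> R L" and T: "T \<subseteq> R L"
  shows "(\<Sum>r\<in>R L. card ((\<lambda>c. rep L r <# c) ` S \<inter> T)) = card S * card T"
proof -
  have fS: "finite S" using finR S finite_subset by blast
  have eq1: "card ((\<lambda>c. rep L r <# c) ` S \<inter> T) = card {c \<in> S. rep L r <# c \<in> T}" if r: "r \<in> R L" for r
  proof -
    have cm: "cm_ok (\<lambda>c. rep L r <# c) (\<lambda>c. inv (rep L r) <# c)" using cm_left[OF rep(1)[OF r]] .
    have "inj_on (\<lambda>c. rep L r <# c) (R L)"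
    proof (rule inj_onI)
      fix c d assume "c \<in> R L" "d \<in> R L" "rep L r <# c = rep L r <# d"
      then have "inv (rep L r) <# (rep L r <# c) = inv (rep L r) <# (rep L r <# d)" by simp
      then show "c = d" using cmD(3)[OF cm \<open>c \<in> R L\<close>] cmD(3)[OF cm \<open>d \<in> R L\<close>] by simp
    qed
    then have inj: "inj_on (\<lambda>c. rep L r <# c) {c \<in> S. rep L r <# c \<in> T}"
      by (rule inj_on_subset) (use S in auto)
    have "(\<lambda>c. rep L r <# c) ` S \<inter> T = (\<lambda>c. rep L r <# c) ` {c \<in> S. rep L r <# c \<in> T}" by blast
    then show ?thesis using card_image[OF inj] by simp
  qed
  have "(\<Sum>r\<in>R L. card ((\<lambda>c. rep L r <# c) ` S \<inter> T)) = (\<Sum>r\<in>R L. card {c \<in> S. rep L r <# c \<in> T})"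
    using eq1 by (rule sum.cong[OF refl])
  also have "\<dots> = (\<Sum>r\<in>R L. \<Sum>c\<in>S. if rep L r <# c \<in> T then 1 else 0)"
    using fS by (simp add: card_filter_sum)
  also have "\<dots> = (\<Sum>c\<in>S. \<Sum>r\<in>R L. if rep L r <# c \<in> T then 1 else 0)"
    by (rule sum.swap)
  also have "\<dots> = (\<Sum>c\<in>S. card {r \<in> R L. rep L r <# c \<in> T})"
    using finR by (simp add: card_filter_sum)
  also have "\<dots> = (\<Sum>c\<in>S. card T)" using count_fixed S T by (intro sum.cong) auto
  finally show ?thesis by simp
qed

lemma count_min: assumes S: "S \<subseteq> R L" and T: "T \<subseteq> R L"
  shows "\<exists>r\<in>R L. card ((\<lambda>c. rep L r <# c) ` S \<inter> T) * N L \<le> card S * card T"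
proof (rule ccontr)
  assume "\<not> ?thesis"
  then have lt: "card S * card T < card ((\<lambda>c. rep L r <# c) ` S \<inter> T) * N L" if "r \<in> R L" for r
    using that by (simp add: not_le)
  have ne: "R L \<noteq> {}" using Gam_R by blast
  have "(\<Sum>r\<in>R L. card S * card T) < (\<Sum>r\<in>R L. card ((\<lambda>c. rep L r <# c) ` S \<inter> T) * N L)"
    using lt finR ne by (intro sum_strict_mono) auto
  also have "\<dots> = (\<Sum>r\<in>R L. card ((\<lambda>c. rep L r <# c) ` S \<inter> T)) * N L"
    by (rule sum_distrib_right[symmetric])
  also have "\<dots> = card S * card T * N L" using count_sum[OF S T] by simp
  also have "(\<Sum>r\<in>R L. card S * card T) = card S * card T * N L" unfolding chain_index_def by simp
  finally show False by simp
qed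

end


context bnd begin

lemma mprob: "measure M X \<le> 1" "0 \<le> measure M X"
  using P.prob_le_1 by auto

lemma msub3: "A \<in> sets M \<Longrightarrow> B \<in> sets M \<Longrightarrow> C \<in> sets M \<Longrightarrow>
  measure M (A \<union> B \<union> C) \<le> measure M A + measure M B + measure M C"
  using msub[of "A \<union> B" C] msub[of A B] by auto

lemma mix: assumes A: "A \<in> sets M" and C: "C \<in> sets M" and e: "e > 0"
  shows "\<exists>g\<in>carrier G. measure M (ls g A \<inter> C) \<le> measure M A * measure M C + e"
proof -
  define d where "d = e / 5"
  have d: "d > 0" unfolding d_def using e by simp
  obtain L1 where L1: "\<forall>L\<ge>L1. \<exists>S \<subseteq> R L. measure M (symd A (cyl L S)) < d"
    using apx_refine[OF apx_all[OF A] A d] by blast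
  obtain L2 where L2: "\<forall>L\<ge>L2. \<exists>S \<subseteq> R L. measure M (symd C (cyl L S)) < d"
    using apx_refine[OF apx_all[OF C] C d] by blast
  define L where "L = max L1 L2"
  have "L \<ge> L1" "L \<ge> L2" unfolding L_def by auto
  then have "\<exists>S \<subseteq> R L. measure M (symd A (cyl L S)) < d" "\<exists>S \<subseteq> R L. measure M (symd C (cyl L S)) < d"
    using L1 L2 by blast+
  then obtain S T where S: "S \<subseteq> R L" "measure M (symd A (cyl L S)) < d"
    and T: "T \<subseteq> R L" "measure M (symd C (cyl L T)) < d" by blast
  define U where "U = cyl L S"
  define V where "V = cyl L T"
  have Us: "U \<in> sets M" unfolding U_def using cyl_sets[OF S(1)] .
  have Vs: "V \<in> sets M" unfolding V_def using cyl_sets[OF T(1)] .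
  obtain r where r: "r \<in> R L" "card ((\<lambda>c. rep L r <# c) ` S \<inter> T) * N L \<le> card S * card T"
    using count_min[OF S(1) T(1)] by blast
  define g where "g = rep L r"
  have g: "g \<in> carrier G" unfolding g_def using rep(1)[OF r(1)] .
  have cm: "cm_ok (\<lambda>c. g <# c) (\<lambda>c. inv g <# c)" using cm_left[OF g] .
  have gS: "(\<lambda>c. g <# c) ` S \<subseteq> R L" using cmD(1)[OF cm] S(1) by blast
  have NL: "real (N L) > 0" using N_pos by simp
  have "ls g U \<inter> V = cyl L ((\<lambda>c. g <# c) ` S \<inter> T)"
    unfolding U_def V_def ls_cyl[OF g S(1)] cyl_Int ..
  then have "measure M (ls g U \<inter> V) = card ((\<lambda>c. g <# c) ` S \<inter> T) / N L"
    using cyl_meas[of "(\<lambda>c. g <# c) ` S \<inter> T" L] gS by auto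
  also have "\<dots> \<le> (card S / N L) * (card T / N L)"
  proof -
    have "real (card ((\<lambda>c. g <# c) ` S \<inter> T)) * real (N L) \<le> real (card S) * real (card T)"
      using r(2) unfolding g_def by (metis of_nat_le_iff of_nat_mult)
    then show ?thesis using NL by (simp add: field_simps)
  qed
  also have "\<dots> = measure M U * measure M V"
    unfolding U_def V_def using cyl_meas[OF S(1)] cyl_meas[OF T(1)] by simp
  finally have m1: "measure M (ls g U \<inter> V) \<le> measure M U * measure M V" .
  have sAU: "measure M (A - U) < d"
    using S(2) P.finite_measure_mono[of "A - U" "symd A U"] symd_sets[OF A Us]
    unfolding U_def symd_def by auto
  have sUA: "measure M (U - A) < d"
    using S(2) P.finite_measure_mono[of "U - A" "symd A U"] symd_sets[OF A Us]
    unfolding U_def symd_def by auto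
  have sCV: "measure M (C - V) < d"
    using T(2) P.finite_measure_mono[of "C - V" "symd C V"] symd_sets[OF C Vs]
    unfolding V_def symd_def by auto
  have sVC: "measure M (V - C) < d"
    using T(2) P.finite_measure_mono[of "V - C" "symd C V"] symd_sets[OF C Vs]
    unfolding V_def symd_def by auto
  have mU: "measure M U \<le> measure M A + d"
  proof -
    have "measure M U \<le> measure M (A \<union> (U - A))"
      using A Us by (intro P.finite_measure_mono) auto
    also have "\<dots> \<le> measure M A + measure M (U - A)" using A Us by (intro msub) auto
    finally show ?thesis using sUA by simp
  qed
  have mV: "measure M V \<le> measure M C + d"
  proof -
    have "measure M V \<le> measure M (C \<union> (V - C))"
      using C Vs by (intro P.finite_measure_mono) auto
    also have "\<dots> \<le> measure M C + measure M (V - C)" using C Vs by (intro msub) auto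
    finally show ?thesis using sVC by simp
  qed
  have prod: "measure M U * measure M V \<le> measure M A * measure M C + 2 * d"
  proof -
    have "measure M U * measure M V \<le> measure M U * (measure M C + d)"
      using mV mprob(2)[of U] by (rule mult_left_mono)
    also have "\<dots> = measure M U * measure M C + measure M U * d" by (simp add: algebra_simps)
    also have "measure M U * d \<le> d" using mprob(1)[of U] d by simp
    also have "measure M U * measure M C \<le> (measure M A + d) * measure M C"
      using mU mprob(2)[of C] by (rule mult_right_mono)
    also have "\<dots> = measure M A * measure M C + d * measure M C" by (simp add: algebra_simps)
    also have "d * measure M C \<le> d" using mprob(1)[of C] d by simp
    finally show ?thesis by simp
  qed
  have AU: "A - U \<in> sets M" using A Us by auto
  have sub: "ls g A \<inter> C \<subseteq> (ls g U \<inter> V) \<union> ls g (A - U) \<union> (C - V)"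
    unfolding ls_def by blast
  have "measure M (ls g A \<inter> C) \<le> measure M ((ls g U \<inter> V) \<union> ls g (A - U) \<union> (C - V))"
    using sub ls_sets[OF g Us] ls_sets[OF g AU] Vs C by (intro P.finite_measure_mono) auto
  also have "\<dots> \<le> measure M (ls g U \<inter> V) + measure M (ls g (A - U)) + measure M (C - V)"
    using ls_sets[OF g Us] ls_sets[OF g AU] Vs C by (intro msub3) auto
  also have "measure M (ls g (A - U)) = measure M (A - U)" using ls_sets(2)[OF g AU] .
  finally have "measure M (ls g A \<inter> C) \<le> measure M A * measure M C + 4 * d"
    using m1 prod sAU sCV by linarith
  then show ?thesis using g d unfolding d_def by (intro bexI[of _ g]) auto
qed

end


context bnd begin

abbreviation "sa A \<gamma> \<equiv> set_act G A \<gamma>"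

lemma sa_sets: assumes "\<gamma> \<in> carrier G" "A \<in> sets M"
  shows "sa A \<gamma> \<in> sets M" "measure M (sa A \<gamma>) = measure M A"
  unfolding set_act_lift using lift_image_sets[OF cm_right[OF assms(1)] assms(2)] by auto

lemma lift_Bd: assumes "cm_ok \<phi> \<psi>" shows "lift \<phi> ` Bd = Bd"
proof -
  have "lift \<phi> ` Bd = lift \<psi> -` Bd \<inter> Bd" by (rule lift_image[OF assms order.refl])
  also have "\<dots> = Bd" using lift_bd[OF cm_sym[OF assms]] by blast
  finally show ?thesis .
qed

lemma lift_diff: assumes "cm_ok \<phi> \<psi>" "X \<subseteq> Bd" "Y \<subseteq> Bd"
  shows "lift \<phi> ` (X - Y) = lift \<phi> ` X - lift \<phi> ` Y"
proof -
  have "inj_on (lift \<phi>) (X \<union> Y)" using assms(2,3) by (intro inj_on_subset[OF lift_inj[OF assms(1)]]) auto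
  then show ?thesis by (rule inj_on_image_set_diff) auto
qed

lemma sa_compl: assumes "\<gamma> \<in> carrier G" "A \<subseteq> Bd" shows "sa (Bd - A) \<gamma> = Bd - sa A \<gamma>"
  unfolding set_act_lift using lift_diff[OF cm_right[OF assms(1)] order.refl assms(2)]
    lift_Bd[OF cm_right[OF assms(1)]] by simp

lemma comm: assumes g: "g \<in> carrier G" and \<gamma>: "\<gamma> \<in> carrier G" and x: "x \<in> Bd"
  shows "lift (\<lambda>c. g <# c) (lift (\<lambda>c. c #> \<gamma>) x) = lift (\<lambda>c. c #> \<gamma>) (lift (\<lambda>c. g <# c) x)"
proof
  fix n
  have "x n \<subseteq> carrier G" using R_sub[OF bd_mem[OF x]] .
  then have "g <# (x n #> \<gamma>) = (g <# x n) #> \<gamma>" using coset_assoc g \<gamma> by blast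
  then show "lift (\<lambda>c. g <# c) (lift (\<lambda>c. c #> \<gamma>) x) n = lift (\<lambda>c. c #> \<gamma>) (lift (\<lambda>c. g <# c) x) n"
    unfolding lift_def by simp
qed

lemma sa_ls: assumes g: "g \<in> carrier G" and \<gamma>: "\<gamma> \<in> carrier G" and A: "A \<subseteq> Bd"
  shows "sa (ls g A) \<gamma> = ls g (sa A \<gamma>)"
proof -
  have "sa (ls g A) \<gamma> = (\<lambda>x. lift (\<lambda>c. c #> \<gamma>) (lift (\<lambda>c. g <# c) x)) ` A"
    unfolding set_act_lift ls_def by (simp add: image_image)
  also have "\<dots> = (\<lambda>x. lift (\<lambda>c. g <# c) (lift (\<lambda>c. c #> \<gamma>) x)) ` A"
    using comm[OF g \<gamma>] A by (intro image_cong) auto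
  also have "\<dots> = ls g (sa A \<gamma>)" unfolding set_act_lift ls_def by (simp add: image_image)
  finally show ?thesis .
qed

lemma ls_diff: assumes "g \<in> carrier G" "X \<subseteq> Bd" "Y \<subseteq> Bd" shows "ls g (X - Y) = ls g X - ls g Y"
  unfolding ls_def using lift_diff[OF cm_left[OF assms(1)] assms(2,3)] .

lemma sa_Bd: assumes "\<gamma> \<in> carrier G" "A \<subseteq> Bd" shows "sa A \<gamma> \<subseteq> Bd"
  unfolding set_act_lift using lift_bd[OF cm_right[OF assms(1)]] assms(2) by blast

lemma diff_sym: assumes "\<gamma> \<in> carrier G" "A \<in> sets M"
  shows "measure M (A - sa A \<gamma>) = measure M (sa A \<gamma> - A)"
proof -
  have s: "sa A \<gamma> \<in> sets M" "measure M (sa A \<gamma>) = measure M A" using sa_sets[OF assms] by auto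
  have "measure M (A - sa A \<gamma>) = measure M A - measure M (A \<inter> sa A \<gamma>)"
    using P.finite_measure_Diff'[OF assms(2) s(1)] .
  also have "\<dots> = measure M (sa A \<gamma>) - measure M (sa A \<gamma> \<inter> A)" using s(2) by (simp add: Int_commute)
  also have "\<dots> = measure M (sa A \<gamma> - A)" using P.finite_measure_Diff'[OF s(1) assms(2)] by simp
  finally show ?thesis .
qed

definition Bl :: "(nat \<Rightarrow> 'a set) set \<Rightarrow> 'a list \<Rightarrow> (nat \<Rightarrow> 'a set) set" where
  "Bl A gs = (\<Union>g\<in>set gs. ls g A)"

lemma Bl_sets: "A \<in> sets M \<Longrightarrow> set gs \<subseteq> carrier G \<Longrightarrow> Bl A gs \<in> sets M"
  unfolding Bl_def using ls_sets by (intro sets.finite_UN) auto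

lemma greedy: assumes A: "A \<in> sets M" and a: "0 < measure M A"
  shows "\<exists>gs. length gs \<le> k \<and> set gs \<subseteq> carrier G \<and>
     min (k * measure M A / 2) (1/4) \<le> measure M (Bl A gs) \<and> measure M (Bl A gs) \<le> 1/4 + measure M A"
proof (induction k)
  case 0
  have "Bl A [] = {}" unfolding Bl_def by simp
  then show ?case using a by (intro exI[of _ "[]"]) auto
next
  case (Suc k)
  let ?a = "measure M A"
  from Suc obtain gs where gs: "length gs \<le> k" "set gs \<subseteq> carrier G"
    "min (k * ?a / 2) (1/4) \<le> measure M (Bl A gs)" "measure M (Bl A gs) \<le> 1/4 + ?a" by blast
  let ?B = "Bl A gs"
  have Bs: "?B \<in> sets M" using Bl_sets[OF A gs(2)] .
  show ?case
  proof (cases "measure M ?B \<ge> 1/4")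
    case True
    then show ?thesis using gs by (intro exI[of _ gs]) auto
  next
    case False
    then have kB: "k * ?a / 2 \<le> measure M ?B" using gs(3) by (simp add: min_def split: if_splits)
    have e: "?a / 4 > 0" using a by simp
    obtain g where g: "g \<in> carrier G" "measure M (ls g A \<inter> ?B) \<le> ?a * measure M ?B + ?a / 4"
      using mix[OF A Bs e] by blast
    have gA: "ls g A \<in> sets M" "measure M (ls g A) = ?a" using ls_sets[OF g(1) A] by auto
    have "?a * measure M ?B \<le> ?a * (1/4)" using False a by (intro mult_left_mono) auto
    then have int: "measure M (ls g A \<inter> ?B) \<le> ?a / 2" using g(2) by simp
    have BlC: "Bl A (g # gs) = ?B \<union> ls g A" unfolding Bl_def by auto
    have m: "measure M (Bl A (g # gs)) = measure M ?B + (?a - measure M (ls g A \<inter> ?B))"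
      unfolding BlC using P.finite_measure_Union'[OF Bs gA(1)] P.finite_measure_Diff'[OF gA(1) Bs] gA(2)
      by simp
    have "measure M (ls g A \<inter> ?B) \<ge> 0" by simp
    then have up: "measure M (Bl A (g # gs)) \<le> 1/4 + ?a" using m False by linarith
    have lo: "Suc k * ?a / 2 \<le> measure M (Bl A (g # gs))" using m int kB by (simp add: field_simps)
    have lo2: "min (Suc k * ?a / 2) (1/4) \<le> measure M (Bl A (g # gs))"
      using order.trans[OF min.cobounded1 lo] .
    have "length (g # gs) \<le> Suc k" "set (g # gs) \<subseteq> carrier G" using gs(1,2) g(1) by auto
    then show ?thesis using up lo2 by blast
  qed
qed

lemma construct: assumes A: "A \<in> sets M" and a: "0 < measure M A" "measure M A \<le> 1/2"
  shows "\<exists>B \<in> sets M. 1/4 \<le> measure M B \<and> measure M B \<le> 3/4 \<and>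
     (\<forall>\<gamma>\<in>carrier G. measure M (B - sa B \<gamma>) \<le> measure M (sa A \<gamma> - A) / measure M A)"
proof -
  let ?a = "measure M A"
  define k where "k = nat \<lceil>1 / (2 * ?a)\<rceil>"
  have k1: "real k \<ge> 1 / (2 * ?a)" unfolding k_def by linarith
  have k2: "real k \<le> 1 / ?a"
  proof -
    have "real k = of_int \<lceil>1 / (2 * ?a)\<rceil>" unfolding k_def using a by simp
    moreover have "of_int \<lceil>1 / (2 * ?a)\<rceil> - 1 < 1 / (2 * ?a)" using ceiling_correct by blast
    ultimately have "real k < 1 / (2 * ?a) + 1" by linarith
    moreover have "1 \<le> 1 / (2 * ?a)" using a by (simp add: field_simps)
    ultimately show ?thesis by (simp add: field_simps)
  qed
  obtain gs where gs: "length gs \<le> k" "set gs \<subseteq> carrier G"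
     "min (k * ?a / 2) (1/4) \<le> measure M (Bl A gs)" "measure M (Bl A gs) \<le> 1/4 + ?a"
    using greedy[OF A a(1)] by blast
  have "k * ?a / 2 \<ge> 1/4" using k1 a by (simp add: field_simps)
  then have lo: "1/4 \<le> measure M (Bl A gs)" using gs(3) by (simp add: min_def split: if_splits)
  have up: "measure M (Bl A gs) \<le> 3/4" using gs(4) a by simp
  have len: "real (length gs) * ?a \<le> 1"
  proof -
    have "real (length gs) \<le> 1 / ?a" using gs(1) k2 by linarith
    then show ?thesis using a by (simp add: field_simps)
  qed
  let ?B = "Bl A gs"
  have AB: "A \<subseteq> Bd" using sets_Bd[OF A] .
  have dec: "measure M (?B - sa ?B \<gamma>) \<le> measure M (sa A \<gamma> - A) / ?a" if \<gamma>: "\<gamma> \<in> carrier G" for \<gamma>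
  proof -
    have sAs: "sa A \<gamma> \<in> sets M" using sa_sets[OF \<gamma> A] by simp
    have Ds: "A - sa A \<gamma> \<in> sets M" using sAs A by auto
    have "sa ?B \<gamma> = (\<Union>g\<in>set gs. sa (ls g A) \<gamma>)" unfolding Bl_def set_act_def by auto
    also have "\<dots> = (\<Union>g\<in>set gs. ls g (sa A \<gamma>))" using sa_ls[OF _ \<gamma> AB] gs(2) by auto
    finally have sB: "sa ?B \<gamma> = (\<Union>g\<in>set gs. ls g (sa A \<gamma>))" .
    have sub: "?B - sa ?B \<gamma> \<subseteq> (\<Union>g\<in>set gs. ls g (A - sa A \<gamma>))"
    proof
      fix x assume x: "x \<in> ?B - sa ?B \<gamma>"
      then obtain g where g: "g \<in> set gs" "x \<in> ls g A" unfolding Bl_def by blast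
      have "x \<notin> ls g (sa A \<gamma>)" using x g(1) unfolding sB by blast
      then have "x \<in> ls g A - ls g (sa A \<gamma>)" using g(2) by blast
      also have "\<dots> = ls g (A - sa A \<gamma>)" using ls_diff[OF _ AB sa_Bd[OF \<gamma> AB], of g] g(1) gs(2) by auto
      finally show "x \<in> (\<Union>g\<in>set gs. ls g (A - sa A \<gamma>))" using g(1) by blast
    qed
    have sets: "(\<lambda>g. ls g (A - sa A \<gamma>)) ` set gs \<subseteq> sets M" using ls_sets Ds gs(2) by auto
    have "measure M (?B - sa ?B \<gamma>) \<le> measure M (\<Union>g\<in>set gs. ls g (A - sa A \<gamma>))"
      using sub sets by (intro P.finite_measure_mono) auto
    also have "\<dots> \<le> (\<Sum>g\<in>set gs. measure M (ls g (A - sa A \<gamma>)))"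
      using sets by (intro P.finite_measure_subadditive_finite) auto
    also have "\<dots> = (\<Sum>g\<in>set gs. measure M (A - sa A \<gamma>))"
      using ls_sets(2)[OF _ Ds] gs(2) by (intro sum.cong) auto
    also have "\<dots> = card (set gs) * measure M (A - sa A \<gamma>)" by simp
    also have "\<dots> \<le> length gs * measure M (A - sa A \<gamma>)"
      by (intro mult_right_mono) (auto simp: card_length)
    also have "measure M (A - sa A \<gamma>) = measure M (sa A \<gamma> - A)" using diff_sym[OF \<gamma> A] .
    also have "length gs * measure M (sa A \<gamma> - A) \<le> measure M (sa A \<gamma> - A) / ?a"
    proof -
      have "length gs * measure M (sa A \<gamma> - A) * ?a \<le> measure M (sa A \<gamma> - A)"
        using len mult_left_mono[OF len, of "measure M (sa A \<gamma> - A)"] by (simp add: algebra_simps)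
      then show ?thesis using a by (simp add: field_simps)
    qed
    finally show ?thesis .
  qed
  show ?thesis using Bl_sets[OF A gs(2)] lo up dec by blast
qed

end


context bnd begin

lemma sandwich0: assumes "\<And>n. 0 \<le> (g::nat \<Rightarrow> real) n" "\<And>n. g n \<le> h n" "h \<longlonglongrightarrow> 0"
  shows "g \<longlonglongrightarrow> 0"
  by (rule real_tendsto_sandwich[of "\<lambda>_. 0" g sequentially h]) (use assms in auto)

lemma prodbound: assumes "1/4 \<le> (m::real)" "m \<le> 3/4" shows "3/16 \<le> m * (1 - m)"
proof -
  have "0 \<le> (m - 1/4) * (3/4 - m)" using assms by (intro mult_nonneg_nonneg) auto
  moreover have "m * (1 - m) - 3/16 = (m - 1/4) * (3/4 - m)" by (simp add: field_simps)
  ultimately show ?thesis by linarith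
qed

lemma se_gap: assumes se: "strongly_ergodic G M" shows "spectral_gap G M"
  unfolding spectral_gap_def
proof
  assume "\<exists>A. (\<forall>n. A n \<in> sets M \<and> 0 < measure M (A n) \<and> measure M (A n) \<le> 1/2) \<and>
          (\<forall>\<gamma> \<in> carrier G. (\<lambda>n. measure M (sa (A n) \<gamma> - A n) / measure M (A n)) \<longlonglongrightarrow> 0)"
  then obtain A where A: "\<And>n. A n \<in> sets M" "\<And>n. 0 < measure M (A n)" "\<And>n. measure M (A n) \<le> 1/2"
    and lim: "\<And>\<gamma>. \<gamma> \<in> carrier G \<Longrightarrow> (\<lambda>n. measure M (sa (A n) \<gamma> - A n) / measure M (A n)) \<longlonglongrightarrow> 0"
    by blast
  have "\<forall>n. \<exists>B. B \<in> sets M \<and> 1/4 \<le> measure M B \<and> measure M B \<le> 3/4 \<and>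
     (\<forall>\<gamma>\<in>carrier G. measure M (B - sa B \<gamma>) \<le> measure M (sa (A n) \<gamma> - A n) / measure M (A n))"
    using construct[OF A(1) A(2) A(3)] by blast
  then obtain B where B: "\<And>n. B n \<in> sets M" "\<And>n. 1/4 \<le> measure M (B n)" "\<And>n. measure M (B n) \<le> 3/4"
    "\<And>n \<gamma>. \<gamma>\<in>carrier G \<Longrightarrow> measure M (B n - sa (B n) \<gamma>) \<le> measure M (sa (A n) \<gamma> - A n) / measure M (A n)"
    by metis
  have "\<forall>\<gamma>\<in>carrier G. (\<lambda>n. measure M (B n - sa (B n) \<gamma>)) \<longlonglongrightarrow> 0"
  proof
    fix \<gamma> assume \<gamma>: "\<gamma> \<in> carrier G"
    show "(\<lambda>n. measure M (B n - sa (B n) \<gamma>)) \<longlonglongrightarrow> 0"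
      by (rule sandwich0[OF _ B(4)[OF \<gamma>] lim[OF \<gamma>]]) simp
  qed
  then have "(\<lambda>n. measure M (B n) * (1 - measure M (B n))) \<longlonglongrightarrow> 0"
    using se B(1) unfolding strongly_ergodic_def by blast
  moreover have "\<exists>N. \<forall>n\<ge>N. 3/16 \<le> measure M (B n) * (1 - measure M (B n))"
    using prodbound B(2,3) by blast
  ultimately have "3/16 \<le> (0::real)" by (rule LIMSEQ_le_const)
  then show False by simp
qed

lemma compl_meas: "X \<in> sets M \<Longrightarrow> measure M (Bd - X) = 1 - measure M X"
  using P.prob_compl spM by simp

lemma diff_compl: assumes "\<gamma> \<in> carrier G" "X \<in> sets M"
  shows "sa (Bd - X) \<gamma> - (Bd - X) = X - sa X \<gamma>"
proof -
  have XB: "X \<subseteq> Bd" using sets_Bd[OF assms(2)] .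
  have "sa (Bd - X) \<gamma> - (Bd - X) = (Bd - sa X \<gamma>) - (Bd - X)" using sa_compl[OF assms(1) XB] by simp
  also have "\<dots> = X - sa X \<gamma>" using XB by blast
  finally show ?thesis .
qed

lemma gap_se: assumes gap: "spectral_gap G M" shows "strongly_ergodic G M"
proof -
  have nogap: False if "\<And>n. C n \<in> sets M" "\<And>n. 0 < measure M (C n)" "\<And>n. measure M (C n) \<le> 1/2"
    "\<And>\<gamma>. \<gamma> \<in> carrier G \<Longrightarrow> (\<lambda>n. measure M (sa (C n) \<gamma> - C n) / measure M (C n)) \<longlonglongrightarrow> 0" for C
    using gap that unfolding spectral_gap_def by blast
  have erg: "boundary_ergodic G M"
    unfolding boundary_ergodic_def
  proof (intro ballI impI)
    fix A assume A: "A \<in> sets M" and inv: "\<forall>\<gamma>\<in>carrier G. sa A \<gamma> = A"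
    show "measure M A = 0 \<or> measure M A = 1"
    proof (rule ccontr)
      assume "\<not> ?thesis"
      then have n: "measure M A \<noteq> 0" "measure M A \<noteq> 1" by auto
      have "0 \<le> measure M A" "measure M A \<le> 1" using mprob[of A] by auto
      then have a: "0 < measure M A" "measure M A < 1" using n by linarith+
      show False
      proof (cases "measure M A \<le> 1/2")
        case True
        show False
          by (rule nogap[of "\<lambda>_. A"]) (use A a True inv in auto)
      next
        case False
        have C: "Bd - A \<in> sets M" using A sets.top[of M] spM by auto
        have mC: "measure M (Bd - A) = 1 - measure M A" using compl_meas[OF A] .
        have "sa (Bd - A) \<gamma> - (Bd - A) = {}" if "\<gamma> \<in> carrier G" for \<gamma>
          using diff_compl[OF that A] inv that by simp
        then have z: "measure M (sa (Bd - A) \<gamma> - (Bd - A)) = 0" if "\<gamma> \<in> carrier G" for \<gamma>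
          using that by (metis measure_empty)
        have e0: "(\<lambda>n. measure M (sa (Bd - A) \<gamma> - (Bd - A)) / measure M (Bd - A)) \<longlonglongrightarrow> 0"
          if "\<gamma> \<in> carrier G" for \<gamma> unfolding z[OF that] by simp
        show False
          by (intro nogap[of "\<lambda>_. Bd - A"]) (use C mC a False e0 in auto)
      qed
    qed
  qed
  have seq: "(\<lambda>n. measure M (A n) * (1 - measure M (A n))) \<longlonglongrightarrow> 0"
    if A: "\<forall>n. A n \<in> sets M"
    and lim: "\<forall>\<gamma> \<in> carrier G. (\<lambda>n. measure M (A n - sa (A n) \<gamma>)) \<longlonglongrightarrow> 0" for A
  proof (rule ccontr)
    define f where "f n = measure M (A n) * (1 - measure M (A n))" for n
    assume "\<not> (\<lambda>n. measure M (A n) * (1 - measure M (A n))) \<longlonglongrightarrow> 0"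
    then have "\<not> f \<longlonglongrightarrow> 0" unfolding f_def .
    then obtain e where e: "e > 0" "\<not> eventually (\<lambda>n. dist (f n) 0 < e) sequentially"
      unfolding tendsto_iff by blast
    define S where "S = {n. e \<le> f n}"
    have fge: "f n \<ge> 0" for n unfolding f_def using mprob[of "A n"] by simp
    have "\<forall>m. \<exists>n\<ge>m. n \<in> S"
    proof
      fix m
      from e(2) have "\<not> (\<forall>n\<ge>m. dist (f n) 0 < e)" unfolding eventually_sequentially by blast
      then obtain n where "n \<ge> m" "\<not> dist (f n) 0 < e" by blast
      then show "\<exists>n\<ge>m. n \<in> S" unfolding S_def using fge by auto
    qed
    then have infS: "infinite S" using infinite_nat_iff_unbounded_le by blast
    define \<sigma> where "\<sigma> = enumerate S"
    have sm: "strict_mono \<sigma>" unfolding strict_mono_def \<sigma>_def using enumerate_mono[OF _ infS] by blast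
    have inS: "e \<le> f (\<sigma> k)" for k using enumerate_in_set[OF infS] unfolding \<sigma>_def S_def by blast
    have bnds: "e \<le> measure M (A (\<sigma> k))" "e \<le> 1 - measure M (A (\<sigma> k))" for k
    proof -
      have m: "0 \<le> measure M (A (\<sigma> k))" "measure M (A (\<sigma> k)) \<le> 1" using mprob by auto
      have "f (\<sigma> k) \<le> measure M (A (\<sigma> k))" unfolding f_def using m
        by (simp add: mult_left_le)
      then show "e \<le> measure M (A (\<sigma> k))" using inS[of k] by simp
      have "f (\<sigma> k) \<le> 1 - measure M (A (\<sigma> k))" unfolding f_def using m
        by (simp add: mult_left_le_one_le)
      then show "e \<le> 1 - measure M (A (\<sigma> k))" using inS[of k] by simp
    qed
    define C where "C k = (if measure M (A (\<sigma> k)) \<le> 1/2 then A (\<sigma> k) else Bd - A (\<sigma> k))" for k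
    have Cs: "C k \<in> sets M" for k unfolding C_def using A sets.top[of M] spM by auto
    have Cm: "e \<le> measure M (C k) \<and> measure M (C k) \<le> 1/2" for k
      using bnds[of k] compl_meas[of "A (\<sigma> k)"] A unfolding C_def by auto
    have Cd: "measure M (sa (C k) \<gamma> - C k) = measure M (A (\<sigma> k) - sa (A (\<sigma> k)) \<gamma>)"
      if \<gamma>: "\<gamma> \<in> carrier G" for k \<gamma>
      unfolding C_def using diff_sym[OF \<gamma> A[rule_format]] diff_compl[OF \<gamma> A[rule_format]] by auto
    show False
    proof (rule nogap[OF Cs])
      show "0 < measure M (C n)" for n using Cm[of n] e by linarith
      show "measure M (C n) \<le> 1/2" for n using Cm[of n] by simp
      fix \<gamma> assume \<gamma>: "\<gamma> \<in> carrier G"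
      have l1: "(\<lambda>k. measure M (A (\<sigma> k) - sa (A (\<sigma> k)) \<gamma>)) \<longlonglongrightarrow> 0"
        using LIMSEQ_subseq_LIMSEQ[OF lim[rule_format, OF \<gamma>] sm] by (simp add: comp_def)
      have l2: "(\<lambda>k. measure M (A (\<sigma> k) - sa (A (\<sigma> k)) \<gamma>) / e) \<longlonglongrightarrow> 0"
        by (rule tendsto_divide_zero[OF l1])
      show "(\<lambda>k. measure M (sa (C k) \<gamma> - C k) / measure M (C k)) \<longlonglongrightarrow> 0"
      proof (rule sandwich0[OF _ _ l2])
        fix k
        show "0 \<le> measure M (sa (C k) \<gamma> - C k) / measure M (C k)" by simp
        have "measure M (sa (C k) \<gamma> - C k) / measure M (C k) \<le> measure M (sa (C k) \<gamma> - C k) / e"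
          using Cm[of k] e by (intro divide_left_mono) auto
        then show "measure M (sa (C k) \<gamma> - C k) / measure M (C k) \<le> measure M (A (\<sigma> k) - sa (A (\<sigma> k)) \<gamma>) / e"
          using Cd[OF \<gamma>] by simp
      qed
    qed
  qed
  show ?thesis unfolding strongly_ergodic_def using erg seq by blast
qed

end

lemma bnd_intro: "fin_gen_group G \<Longrightarrow> normal_fi_chain G \<Gamma> \<Longrightarrow> is_boundary_measure G \<Gamma> M \<Longrightarrow> bnd G \<Gamma> M"
  unfolding fin_gen_group_def by (intro bnd.intro bnd_axioms.intro) auto

theorem theorem4:
  fixes G :: "('a, 'b) monoid_scheme" and \<Gamma> :: "nat \<Rightarrow> 'a set"
    and M :: "(nat \<Rightarrow> 'a set) measure"
  assumes "fin_gen_group G"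
    and "normal_fi_chain G \<Gamma>"
    and "is_boundary_measure G \<Gamma> M"
  shows "strongly_ergodic G M \<longleftrightarrow> spectral_gap G M"
proof -
  interpret bnd G \<Gamma> M using bnd_intro[OF assms] .
  show ?thesis using se_gap gap_se by blast
qed



end
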